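(* Let $h>0$ satisfy $L_eh^2\le1/9$, where $L_e=L+2\epsilon\tilde L$. Then for all $(x,v),(y,u)\in\mathbb{R}^{Nd}\times\mathbb{R}^{Nd}$, $$\sum_{\ell=1}^N\sup_{0\le s\le h}\big|\!\big|\!\big|(q^\ell_s(x,v),p^\ell_s(x,v))-(q^\ell_s(y,u),p^\ell_s(y,u))\big|\!\big|\!\big|^2\le(1+7L_e^{1/2}h)\sum_{\ell=1}^N\big|\!\big|\!\big|(x^\ell-y^\ell,v^\ell-u^\ell)\big|\!\big|\!\big|^2.$$
   Context: Standing assumptions: $\epsilon\ge0$; $V:\mathbb{R}^d\to\mathbb{R}$, $W:\mathbb{R}^d\times\mathbb{R}^d\to\mathbb{R}$ are $C^1$, $\nabla_1W$ the gradient in the first argument, constants $L>0$, $\tilde L\ge0$ with: (a) $V(0)=0$, $V\ge0$; (b) $|\nabla V(x)-\nabla V(y)|\le L|x-y|$; (d) $W$ symmetric, $|\nabla_1W(x,y)-\nabla_1W(\tilde x,\tilde y)|\le\tilde L(|x-\tilde x|+|y-\tilde y|)$. Points of $\mathbb{R}^{Nd}$: $x=(x^1,\dots,x^N)$. $U(x)=\sum_i\big(V(x^i)+\frac\epsilon{2N}\sum_jW(x^i,x^j)\big)$, $\nabla_iU=\partial U/\partial x^i$. Exact flow $(q_t,p_t)(x,v)$: $\dot q^i_t=p^i_t$, $\dot p^i_t=-\nabla_iU(q_t)$, $(q_0,p_0)=(x,v)$. For $(a,b)\in\mathbb{R}^{2d}$, $|\!|\!|(a,b)|\!|\!|^2=|a|^2+L_e^{-1}|b|^2$.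 *)

theory Defs
  imports "HOL-Analysis.Analysis"
begin

text \<open>Configurations of N particles in R^d: functions nat => 'a, only indices i < N matter.\<close>

definition Upot :: "('a::euclidean_space \<Rightarrow> real) \<Rightarrow> ('a \<Rightarrow> 'a \<Rightarrow> real) \<Rightarrow> real \<Rightarrow> nat \<Rightarrow> (nat \<Rightarrow> 'a) \<Rightarrow> real" where
  "Upot V W eps N x = (\<Sum>i<N. V (x i) + eps / (2 * real N) * (\<Sum>j<N. W (x i) (x j)))"

text \<open>Squared triple norm |||(a,b)|||^2 = |a|^2 + Le^{-1} |b|^2.\<close>
definition tnorm2 :: "real \<Rightarrow> 'a::real_normed_vector \<Rightarrow> 'a \<Rightarrow> real" where
  "tnorm2 Le a b = (norm a)\<^sup>2 + (norm b)\<^sup>2 / Le"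

text \<open>(q,p) solves the Hamiltonian ODE on [0,h] with initial data (x,v); the partial gradient
  nabla_i U is the gradient of z |-> U(x with i-th component replaced by z).\<close>
definition is_flow :: "('a::euclidean_space \<Rightarrow> real) \<Rightarrow> ('a \<Rightarrow> 'a \<Rightarrow> real) \<Rightarrow> real \<Rightarrow> nat \<Rightarrow> real
   \<Rightarrow> (real \<Rightarrow> nat \<Rightarrow> 'a) \<Rightarrow> (real \<Rightarrow> nat \<Rightarrow> 'a) \<Rightarrow> (nat \<Rightarrow> 'a) \<Rightarrow> (nat \<Rightarrow> 'a) \<Rightarrow> bool" where
  "is_flow V W eps N h q p x v \<longleftrightarrow>
     (\<forall>i<N. q 0 i = x i \<and> p 0 i = v i) \<and>
     (\<forall>t\<in>{0..h}. \<forall>i<N.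
        ((\<lambda>s. q s i) has_vector_derivative p t i) (at t within {0..h}) \<and>
        (\<exists>g. (GDERIV (\<lambda>z. Upot V W eps N ((q t)(i := z))) (q t i) :> g) \<and>
             ((\<lambda>s. p s i) has_vector_derivative (- g)) (at t within {0..h})))"

end

theory Submission imports Defs begin

lemma quad_bound:
  fixes f :: "'a::euclidean_space \<Rightarrow> real"
  assumes d: "\<And>z. GDERIV f z :> G z"
    and lip: "\<And>z z'. norm (G z - G z') \<le> K * norm (z - z')"
  shows "\<bar>f y - f x - G x \<bullet> (y - x)\<bar> \<le> K * (norm (y - x))\<^sup>2"
proof (cases "y = x")
  case True then show ?thesis by simp
next
  case False
  define \<phi> where "\<phi> t = f (x + t *\<^sub>R (y - x)) - t * (G x \<bullet> (y - x))" for t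
  define \<phi>' where "\<phi>' t = (\<lambda>s::real. s * ((G (x + t *\<^sub>R (y - x)) - G x) \<bullet> (y - x)))" for t
  have der: "(\<phi> has_derivative \<phi>' t) (at t within S)" for t S
  proof -
    have g: "((\<lambda>t. x + t *\<^sub>R (y - x)) has_derivative (\<lambda>s. s *\<^sub>R (y - x))) (at t within S)"
      by (auto intro!: derivative_eq_intros)
    have "(f has_derivative (\<lambda>h. h \<bullet> G (x + t *\<^sub>R (y - x)))) (at (x + t *\<^sub>R (y - x)))"
      using d unfolding gderiv_def by blast
    from has_derivative_compose[OF g this]
    have "((\<lambda>t. f (x + t *\<^sub>R (y - x))) has_derivative (\<lambda>s. (s *\<^sub>R (y - x)) \<bullet> G (x + t *\<^sub>R (y - x)))) (at t within S)" by (simp add: o_def)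
    then have "(\<phi> has_derivative (\<lambda>s. (s *\<^sub>R (y - x)) \<bullet> G (x + t *\<^sub>R (y - x)) - s * (G x \<bullet> (y - x)))) (at t within S)"
      unfolding \<phi>_def by (auto intro!: derivative_eq_intros)
    moreover have "(\<lambda>s. (s *\<^sub>R (y - x)) \<bullet> G (x + t *\<^sub>R (y - x)) - s * (G x \<bullet> (y - x))) = \<phi>' t"
      unfolding \<phi>'_def by (auto simp: inner_commute algebra_simps inner_diff_left)
    ultimately show ?thesis by simp
  qed
  have cont: "continuous_on {0..1} \<phi>"
    using der has_derivative_continuous continuous_at_imp_continuous_on by blast
  obtain t where t: "t \<in> {0<..<1}" and le: "norm (\<phi> 1 - \<phi> 0) \<le> norm (\<phi>' t (1 - 0))"
    using mvt_general[of 0 1 \<phi> \<phi>'] cont der by auto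
  have "norm (\<phi>' t 1) \<le> norm (G (x + t *\<^sub>R (y - x)) - G x) * norm (y - x)"
    unfolding \<phi>'_def by (simp add: Cauchy_Schwarz_ineq2)
  also have "\<dots> \<le> K * norm (t *\<^sub>R (y - x)) * norm (y - x)"
    using lip[of "x + t *\<^sub>R (y - x)" x] by (simp add: mult_right_mono)
  also have "\<dots> \<le> K * norm (y - x) * norm (y - x)"
  proof -
    have p: "0 < norm (y - x)" using False by simp
    have "0 \<le> K * norm (y - x)" by (rule order_trans[OF norm_ge_zero lip])
    then have K: "K \<ge> 0" using p by (simp add: zero_le_mult_iff)
    have "norm (t *\<^sub>R (y - x)) \<le> norm (y - x)" using t by (simp add: mult_left_le_one_le)
    then show ?thesis using K by (simp add: mult_left_mono mult_right_mono)
  qed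
  finally show ?thesis using le unfolding \<phi>_def by (simp add: power2_eq_square algebra_simps)
qed

lemma GDERIV_sum:
  assumes "\<And>k. k \<in> S \<Longrightarrow> GDERIV (f k) x :> g k"
  shows "GDERIV (\<lambda>z. \<Sum>k\<in>S. f k z) x :> (\<Sum>k\<in>S. g k)"
  using assms unfolding gderiv_def inner_sum_right by (rule has_derivative_sum)

lemma GDERIV_cmult:
  assumes "GDERIV f x :> g"
  shows "GDERIV (\<lambda>z. c * f z) x :> c *\<^sub>R g"
  using has_derivative_mult_right[OF assms[unfolded gderiv_def], of c]
  unfolding gderiv_def by (simp add: mult.commute)

lemma GDERIV_unique:
  assumes "GDERIV f x :> g" "GDERIV f x :> g'"
  shows "g = g'"
proof -
  have "(\<lambda>h. h \<bullet> g) = (\<lambda>h. h \<bullet> g')"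
    using has_derivative_unique assms unfolding gderiv_def by blast
  then have "(g - g') \<bullet> g = (g - g') \<bullet> g'" by metis
  then have "(g - g') \<bullet> (g - g') = 0" by (simp add: inner_diff_right)
  then show ?thesis by simp
qed

lemma diag_deriv:
  fixes W :: "'a::euclidean_space \<Rightarrow> 'a \<Rightarrow> real"
  assumes gradW: "\<And>z w. GDERIV (\<lambda>z'. W z' w) z :> G z w"
    and Wsym: "\<And>z w. W z w = W w z"
    and WLip: "\<And>z w z' w'. norm (G z w - G z' w') \<le> Lt * (norm (z - z') + norm (w - w'))"
    and Lt: "Lt \<ge> 0"
  shows "GDERIV (\<lambda>z. W z z) z :> G z z + G z z"
  unfolding gderiv_def has_derivative_at_alt
proof (intro conjI allI impI)
  show "bounded_linear (\<lambda>h. h \<bullet> (G z z + G z z))" by (rule bounded_linear_inner_left)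
  fix e :: real assume e: "e > 0"
  define d where "d = e / (3 * Lt + 1)"
  have d: "d > 0" using e Lt by (simp add: d_def)
  show "\<exists>d>0. \<forall>y. norm (y - z) < d \<longrightarrow>
      norm (W y y - W z z - (y - z) \<bullet> (G z z + G z z)) \<le> e * norm (y - z)"
  proof (intro exI[of _ d] conjI allI impI d)
    fix y assume y: "norm (y - z) < d"
    have lip1: "norm (G a w - G a' w) \<le> Lt * norm (a - a')" for a a' w
      using WLip[of a w a' w] by simp
    have q1: "\<bar>W y y - W z y - G z y \<bullet> (y - z)\<bar> \<le> Lt * (norm (y - z))\<^sup>2"
      by (rule quad_bound[where f = "\<lambda>a. W a y", OF gradW lip1])
    have q2: "\<bar>W y z - W z z - G z z \<bullet> (y - z)\<bar> \<le> Lt * (norm (y - z))\<^sup>2"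
      by (rule quad_bound[where f = "\<lambda>a. W a z", OF gradW lip1])
    have q3: "\<bar>(G z y - G z z) \<bullet> (y - z)\<bar> \<le> Lt * (norm (y - z))\<^sup>2"
    proof -
      have "\<bar>(G z y - G z z) \<bullet> (y - z)\<bar> \<le> norm (G z y - G z z) * norm (y - z)"
        by (rule Cauchy_Schwarz_ineq2)
      also have "\<dots> \<le> Lt * norm (y - z) * norm (y - z)"
        using WLip[of z y z z] by (simp add: mult_right_mono)
      finally show ?thesis by (simp add: power2_eq_square mult.assoc)
    qed
    have sym: "W z y = W y z" by (rule Wsym)
    have eq: "W y y - W z z - (y - z) \<bullet> (G z z + G z z) =
       (W y y - W z y - G z y \<bullet> (y - z)) + (W y z - W z z - G z z \<bullet> (y - z)) + (G z y - G z z) \<bullet> (y - z)"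
    proof -
      have i1: "(y - z) \<bullet> (G z z + G z z) = G z z \<bullet> (y - z) + G z z \<bullet> (y - z)"
        by (metis inner_commute inner_add_left)
      have i2: "(G z y - G z z) \<bullet> (y - z) = G z y \<bullet> (y - z) - G z z \<bullet> (y - z)"
        by (rule inner_diff_left)
      show ?thesis using i1 i2 sym by linarith
    qed
    have "norm (W y y - W z z - (y - z) \<bullet> (G z z + G z z)) \<le> 3 * Lt * (norm (y - z))\<^sup>2"
      unfolding eq real_norm_def using q1 q2 q3 by linarith
    also have "\<dots> \<le> e * norm (y - z)"
    proof -
      have "(3 * Lt + 1) * norm (y - z) \<le> e"
        using y d_def Lt by (simp add: field_simps)
      then have "3 * Lt * norm (y - z) \<le> e" by (smt (verit) norm_ge_zero mult_nonneg_nonneg distrib_right)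
      then show ?thesis by (simp add: power2_eq_square mult_right_mono mult.assoc[symmetric])
    qed
    finally show "norm (W y y - W z z - (y - z) \<bullet> (G z z + G z z)) \<le> e * norm (y - z)" .
  qed
qed

lemma sum_rearr:
  fixes A :: "nat \<Rightarrow> 'a::real_vector"
  shows "(\<Sum>k\<in>S. A k + c *\<^sub>R (\<Sum>j\<in>S. B k j + C k j)) = (\<Sum>k\<in>S. A k) + c *\<^sub>R ((\<Sum>k\<in>S. \<Sum>j\<in>S. B k j) + (\<Sum>k\<in>S. \<Sum>j\<in>S. C k j))"
  by (simp add: sum.distrib scaleR_sum_right scaleR_add_right)

definition force :: "('a::euclidean_space \<Rightarrow> 'a) \<Rightarrow> ('a \<Rightarrow> 'a \<Rightarrow> 'a) \<Rightarrow> real \<Rightarrow> nat \<Rightarrow> (nat \<Rightarrow> 'a) \<Rightarrow> nat \<Rightarrow> 'a" where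
  "force gV gW eps N x i = gV (x i) + (eps / real N) *\<^sub>R (\<Sum>j<N. gW (x i) (x j))"

lemma Upot_grad:
  fixes V :: "'a::euclidean_space \<Rightarrow> real" and W :: "'a \<Rightarrow> 'a \<Rightarrow> real"
  assumes gradV: "\<And>z. GDERIV V z :> gradV z"
    and gradW: "\<And>z w. GDERIV (\<lambda>z'. W z' w) z :> G z w"
    and Wsym: "\<And>z w. W z w = W w z"
    and WLip: "\<And>z w z' w'. norm (G z w - G z' w') \<le> Lt * (norm (z - z') + norm (w - w'))"
    and Lt: "Lt \<ge> 0" and i: "i < N"
  shows "GDERIV (\<lambda>z. Upot V W eps N (x(i := z))) (x i) :> force gradV G eps N x i"
proof -
  let ?y = "\<lambda>z. x(i := z)"
  let ?z = "x i"
  have tV: "GDERIV (\<lambda>z. V (?y z k)) ?z :> (if k = i then gradV ?z else 0)" for k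
    using gradV GDERIV_const by (cases "k = i") auto
  have tW: "GDERIV (\<lambda>z. W (?y z k) (?y z j)) ?z :>
      (if k = i then G ?z (?y ?z j) else 0) + (if j = i then G ?z (?y ?z k) else 0)" for k j
  proof (cases "k = i")
    case True
    show ?thesis
    proof (cases "j = i")
      case True
      then show ?thesis using \<open>k = i\<close> diag_deriv[OF gradW Wsym WLip Lt] by simp
    next
      case False
      then show ?thesis using \<open>k = i\<close> gradW[where z="x i" and w="x j"] by simp
    qed
  next
    case False
    show ?thesis
    proof (cases "j = i")
      case True
      have "GDERIV (\<lambda>z. W z (x k)) ?z :> G ?z (x k)" by (rule gradW)
      then have "GDERIV (\<lambda>z. W (x k) z) ?z :> G ?z (x k)" by (subst Wsym) 
      then show ?thesis using \<open>k \<noteq> i\<close> True by simp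
    next
      case False
      then show ?thesis using \<open>k \<noteq> i\<close> GDERIV_const by simp
    qed
  qed
  have all: "GDERIV (\<lambda>z. Upot V W eps N (?y z)) ?z :>
     (\<Sum>k<N. (if k = i then gradV ?z else 0) + (eps / (2 * real N)) *\<^sub>R
        (\<Sum>j<N. (if k = i then G ?z (?y ?z j) else 0) + (if j = i then G ?z (?y ?z k) else 0)))"
    unfolding Upot_def
    by (intro GDERIV_sum GDERIV_add GDERIV_cmult tV tW)
  have yx: "?y ?z = x" by simp
  have s1: "(\<Sum>k<N. if k = i then gradV ?z else 0) = gradV ?z" using i by simp
  have s2: "(\<Sum>k<N. \<Sum>j<N. (if k = i then G ?z (x j) else 0)) = (\<Sum>j<N. G ?z (x j))"
  proof -
    have "(\<Sum>k<N. \<Sum>j<N. (if k = i then G ?z (x j) else 0)) = (\<Sum>k<N. if k = i then (\<Sum>j<N. G ?z (x j)) else 0)"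
      by (rule sum.cong) auto
    then show ?thesis using i by simp
  qed
  have s3: "(\<Sum>k<N. \<Sum>j<N. (if j = i then G ?z (x k) else 0)) = (\<Sum>k<N. G ?z (x k))"
    using i by simp
  have "(\<Sum>k<N. (if k = i then gradV ?z else 0) + (eps / (2 * real N)) *\<^sub>R
        (\<Sum>j<N. (if k = i then G ?z (?y ?z j) else 0) + (if j = i then G ?z (?y ?z k) else 0)))
      = gradV ?z + (eps / (2 * real N)) *\<^sub>R ((\<Sum>j<N. G ?z (x j)) + (\<Sum>k<N. G ?z (x k)))"
    unfolding yx sum_rearr s1 s2 s3 ..
  also have "\<dots> = force gradV G eps N x i"
    unfolding force_def using i by (simp add: scaleR_2[symmetric] field_simps)
  finally show ?thesis using all by simp
qed

lemma flow_p_deriv: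
  fixes V :: "'a::euclidean_space \<Rightarrow> real" and W :: "'a \<Rightarrow> 'a \<Rightarrow> real"
  assumes gradV: "\<And>z. GDERIV V z :> gradV z"
    and gradW: "\<And>z w. GDERIV (\<lambda>z'. W z' w) z :> G z w"
    and Wsym: "\<And>z w. W z w = W w z"
    and WLip: "\<And>z w z' w'. norm (G z w - G z' w') \<le> Lt * (norm (z - z') + norm (w - w'))"
    and Lt: "Lt \<ge> 0"
    and flow: "is_flow V W eps N h q p x v" and t: "t \<in> {0..h}" and i: "i < N"
  shows "((\<lambda>s. p s i) has_vector_derivative - force gradV G eps N (q t) i) (at t within {0..h})"
proof -
  from flow t i obtain g where g: "GDERIV (\<lambda>z. Upot V W eps N ((q t)(i := z))) (q t i) :> g"
    and d: "((\<lambda>s. p s i) has_vector_derivative - g) (at t within {0..h})"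
    unfolding is_flow_def by blast
  have "g = force gradV G eps N (q t) i"
    using GDERIV_unique[OF g Upot_grad[OF gradV gradW Wsym WLip Lt i, where x="q t"]] .
  then show ?thesis using d by simp
qed

lemma force_lip:
  fixes gV :: "'a::euclidean_space \<Rightarrow> 'a"
  assumes VLip: "\<And>z z'. norm (gV z - gV z') \<le> L * norm (z - z')"
    and WLip: "\<And>z w z' w'. norm (G z w - G z' w') \<le> Lt * (norm (z - z') + norm (w - w'))"
    and i: "i < N" and eps: "eps \<ge> 0" and Lt: "Lt \<ge> 0"
  shows "norm (force gV G eps N x i - force gV G eps N y i)
     \<le> (L + eps * Lt) * norm (x i - y i) + (eps * Lt / real N) * (\<Sum>j<N. norm (x j - y j))"
proof -
  have N: "real N > 0" using i by simp
  have e: "force gV G eps N x i - force gV G eps N y i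
     = (gV (x i) - gV (y i)) + (eps / real N) *\<^sub>R (\<Sum>j<N. G (x i) (x j) - G (y i) (y j))"
    by (simp add: force_def sum_subtractf scaleR_diff_right)
  have n1: "norm (\<Sum>j<N. G (x i) (x j) - G (y i) (y j)) \<le> (\<Sum>j<N. Lt * (norm (x i - y i) + norm (x j - y j)))"
    by (rule order_trans[OF norm_sum sum_mono]) (rule WLip)
  have n2: "(\<Sum>j<N. Lt * (norm (x i - y i) + norm (x j - y j))) = real N * Lt * norm (x i - y i) + Lt * (\<Sum>j<N. norm (x j - y j))"
    by (simp add: distrib_left sum.distrib sum_distrib_left)
  have "norm (force gV G eps N x i - force gV G eps N y i)
      \<le> norm (gV (x i) - gV (y i)) + (eps / real N) * norm (\<Sum>j<N. G (x i) (x j) - G (y i) (y j))"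
    unfolding e using eps N by (metis (no_types, lifting) abs_of_nonneg divide_nonneg_nonneg less_imp_le norm_scaleR norm_triangle_ineq)
  also have "\<dots> \<le> L * norm (x i - y i) + (eps / real N) * (real N * Lt * norm (x i - y i) + Lt * (\<Sum>j<N. norm (x j - y j)))"
    using VLip[of "x i" "y i"] n1 n2 eps N by (intro add_mono mult_left_mono) auto
  also have "\<dots> = (L + eps * Lt) * norm (x i - y i) + (eps * Lt / real N) * (\<Sum>j<N. norm (x j - y j))"
    using N by (simp add: field_simps)
  finally show ?thesis .
qed

lemma norm2_deriv:
  fixes f :: "real \<Rightarrow> 'a::real_inner"
  assumes "(f has_vector_derivative f') (at t within T)"
  shows "((\<lambda>s. (norm (f s))\<^sup>2) has_real_derivative 2 * (f t \<bullet> f')) (at t within T)"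
proof -
  have d: "(f has_derivative (\<lambda>x. x *\<^sub>R f')) (at t within T)"
    using assms by (simp add: has_vector_derivative_def)
  have "((\<lambda>s. f s \<bullet> f s) has_derivative (\<lambda>x. f t \<bullet> (x *\<^sub>R f') + (x *\<^sub>R f') \<bullet> f t)) (at t within T)"
    by (rule has_derivative_inner[OF d d])
  moreover have "(\<lambda>x. f t \<bullet> (x *\<^sub>R f') + (x *\<^sub>R f') \<bullet> f t) = (\<lambda>x. (2 * (f t \<bullet> f')) * x)"
    by (auto simp: inner_commute algebra_simps)
  ultimately show ?thesis
    by (simp add: has_field_derivative_def power2_norm_eq_inner)
qed

lemma nonincr:
  fixes \<phi> \<phi>' :: "real \<Rightarrow> real"
  assumes d: "\<And>t. t \<in> {0..h} \<Longrightarrow> (\<phi> has_real_derivative \<phi>' t) (at t within {0..h})"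
    and n: "\<And>t. t \<in> {0..h} \<Longrightarrow> \<phi>' t \<le> 0" and s: "s \<in> {0..h}"
  shows "\<phi> s \<le> \<phi> 0"
proof -
  have c: "continuous_on {0..h} \<phi>"
    using d DERIV_continuous continuous_on_eq_continuous_within by blast
  show ?thesis
  proof (rule DERIV_nonpos_imp_decreasing_open[of 0 s])
    show "0 \<le> s" using s by simp
    show "continuous_on {0..s} \<phi>" by (rule continuous_on_subset[OF c]) (use s in auto)
    fix x assume x: "0 < x" "x < s"
    then have "at x within {0..h} = at x" using s by (intro at_within_Icc_at) auto
    then show "\<exists>y. (\<phi> has_real_derivative y) (at x) \<and> y \<le> 0"
      using d[of x] n[of x] x s by auto
  qed
qed

lemma gronwall_lin:
  fixes \<phi> \<phi>' :: "real \<Rightarrow> real"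
  assumes d: "\<And>t. t \<in> {0..h} \<Longrightarrow> (\<phi> has_real_derivative \<phi>' t) (at t within {0..h})"
    and b: "\<And>t. t \<in> {0..h} \<Longrightarrow> \<phi>' t \<le> k * \<phi> t + B" and k: "k > 0" and s: "s \<in> {0..h}"
  shows "\<phi> s + B / k \<le> exp (k * s) * (\<phi> 0 + B / k)"
proof -
  define \<psi> where "\<psi> t = exp (- k * t) * (\<phi> t + B / k)" for t
  have dpsi: "(\<psi> has_real_derivative exp (- k * t) * (\<phi>' t - k * \<phi> t - B)) (at t within {0..h})"
    if "t \<in> {0..h}" for t
  proof -
    have "(\<psi> has_real_derivative (- k) * exp (- k * t) * (\<phi> t + B / k) + exp (- k * t) * \<phi>' t) (at t within {0..h})"
      unfolding \<psi>_def using d[OF that]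
      by (auto intro!: derivative_eq_intros simp: algebra_simps)
    moreover have "(- k) * exp (- k * t) * (\<phi> t + B / k) + exp (- k * t) * \<phi>' t = exp (- k * t) * (\<phi>' t - k * \<phi> t - B)"
      using k by (simp add: field_simps)
    ultimately show ?thesis by simp
  qed
  have "\<psi> s \<le> \<psi> 0"
  proof (rule nonincr[OF dpsi _ s])
    fix t assume "t \<in> {0..h}"
    then show "exp (- k * t) * (\<phi>' t - k * \<phi> t - B) \<le> 0"
      using b[of t] by (simp add: mult_nonneg_nonpos)
  qed
  then have "exp (k * s) * \<psi> s \<le> exp (k * s) * (\<phi> 0 + B / k)"
    unfolding \<psi>_def by simp
  moreover have "exp (k * s) * \<psi> s = \<phi> s + B / k"
    unfolding \<psi>_def by (simp add: exp_minus field_simps)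
  ultimately show ?thesis by simp
qed

lemma key_ineq:
  fixes A \<beta> \<alpha> \<gamma> mm Q :: real
  assumes "0 \<le> \<alpha>" "0 \<le> \<gamma>" "\<alpha> + \<gamma> = 1" "\<gamma> \<le> 1/2" "0 \<le> Q" "2 * \<beta> * mm \<le> Q + \<beta>\<^sup>2"
    "A \<ge> 0" "\<beta> \<ge> 0"
  shows "2 * A * \<beta> * (1 + \<alpha>) + \<gamma> * (2 * \<beta> * mm) \<le> 2 * A\<^sup>2 + 2 * \<beta>\<^sup>2 + Q / 2"
proof -
  have "2 * A * \<beta> \<le> A\<^sup>2 + \<beta>\<^sup>2" using sum_squares_bound[of A \<beta>] by simp
  then have 1: "2 * A * \<beta> * (1 + \<alpha>) \<le> (A\<^sup>2 + \<beta>\<^sup>2) * (1 + \<alpha>)" using assms by (intro mult_right_mono) auto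
  have 2: "\<gamma> * (2 * \<beta> * mm) \<le> \<gamma> * (Q + \<beta>\<^sup>2)" using assms by (intro mult_left_mono) auto
  have 3: "(A\<^sup>2 + \<beta>\<^sup>2) * (1 + \<alpha>) + \<gamma> * (Q + \<beta>\<^sup>2) \<le> 2 * A\<^sup>2 + 2 * \<beta>\<^sup>2 + Q / 2"
  proof -
    have a: "\<alpha> = 1 - \<gamma>" using assms by simp
    have "\<gamma> * A\<^sup>2 \<ge> 0" using assms by simp
    moreover have "\<gamma> * Q \<le> Q / 2" using assms by (metis mult_right_mono mult.commute times_divide_eq_right mult_1 divide_le_eq_1 order_refl) 
    ultimately show ?thesis unfolding a by (simp add: algebra_simps)
  qed
  show ?thesis using 1 2 3 by linarith
qed

lemma final_arith:
  fixes \<tau> S0 :: real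
  assumes t0: "0 \<le> \<tau>" and t1: "\<tau> \<le> 1/3" and S0: "S0 \<ge> 0"
  shows "exp (2 * \<tau>) * S0 + (exp (2 * \<tau>) - 1) * (exp (5/2 * \<tau>) * S0) / 4 \<le> (1 + 7 * \<tau>) * S0"
proof -
  have "exp (2 * \<tau>) \<le> 1 + 2 * \<tau> + (2 * \<tau>)\<^sup>2" using t0 t1 by (intro exp_bound) auto
  also have "\<dots> \<le> 1 + 4 * \<tau>" proof -
    have "2 * (\<tau> * \<tau>) \<le> \<tau>" using mult_left_mono[of "2 * \<tau>" 1 \<tau>] t0 t1 by (simp add: algebra_simps)
    then show ?thesis by (simp add: power2_eq_square)
  qed
  finally have e1: "exp (2 * \<tau>) \<le> 1 + 4 * \<tau>" .
  have "exp (5/2 * \<tau>) \<le> exp 1" using t1 by simp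
  then have e2: "exp (5/2 * \<tau>) \<le> 3" using exp_le by linarith
  have e3: "exp (2 * \<tau>) - 1 \<ge> 0" using t0 by simp
  have "(exp (2 * \<tau>) - 1) * exp (5/2 * \<tau>) \<le> (4 * \<tau>) * 3"
    using e1 e2 e3 t0 by (intro mult_mono) auto
  then have "exp (2 * \<tau>) + (exp (2 * \<tau>) - 1) * exp (5/2 * \<tau>) / 4 \<le> 1 + 7 * \<tau>"
    using e1 by linarith
  then have "(exp (2 * \<tau>) + (exp (2 * \<tau>) - 1) * exp (5/2 * \<tau>) / 4) * S0 \<le> (1 + 7 * \<tau>) * S0"
    using S0 by (rule mult_right_mono)
  then show ?thesis by (simp add: algebra_simps)
qed

theorem mainTheorem13:
  fixes V :: "'a::euclidean_space \<Rightarrow> real" and gradV :: "'a \<Rightarrow> 'a"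
    and W :: "'a \<Rightarrow> 'a \<Rightarrow> real" and gradW1 :: "'a \<Rightarrow> 'a \<Rightarrow> 'a"
    and eps L Lt h :: real and N :: nat
    and q1 p1 q2 p2 :: "real \<Rightarrow> nat \<Rightarrow> 'a" and x v y u :: "nat \<Rightarrow> 'a"
  assumes eps: "eps \<ge> 0" and L: "L > 0" and Lt: "Lt \<ge> 0"
    and gradV: "\<And>z. GDERIV V z :> gradV z"
    and V0: "V 0 = 0" and Vnn: "\<And>z. V z \<ge> 0"
    and VLip: "\<And>z z'. norm (gradV z - gradV z') \<le> L * norm (z - z')"
    and gradW: "\<And>z w. GDERIV (\<lambda>z'. W z' w) z :> gradW1 z w"
    and Wsym: "\<And>z w. W z w = W w z"
    and WLip: "\<And>z w z' w'. norm (gradW1 z w - gradW1 z' w') \<le> Lt * (norm (z - z') + norm (w - w'))"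
    and h: "h > 0"
    and hLe: "(L + 2 * eps * Lt) * h\<^sup>2 \<le> 1 / 9"
    and flow1: "is_flow V W eps N h q1 p1 x v"
    and flow2: "is_flow V W eps N h q2 p2 y u"
  shows "(\<Sum>l<N. SUP s\<in>{0..h}. tnorm2 (L + 2 * eps * Lt) (q1 s l - q2 s l) (p1 s l - p2 s l))
     \<le> (1 + 7 * sqrt (L + 2 * eps * Lt) * h) *
        (\<Sum>l<N. tnorm2 (L + 2 * eps * Lt) (x l - y l) (v l - u l))"
proof (cases "N = 0")
  case True
  then show ?thesis by simp
next
  case False
  then have Npos: "real N > 0" by simp
  define Le where "Le = L + 2 * eps * Lt"
  define c where "c = sqrt Le"
  have Le: "Le > 0" using L eps Lt by (simp add: Le_def add_pos_nonneg)
  have c: "c > 0" and cc: "c * c = Le" using Le by (auto simp: c_def)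
  define F1 where "F1 s i = force gradV gradW1 eps N (q1 s) i" for s i
  define F2 where "F2 s i = force gradV gradW1 eps N (q2 s) i" for s i
  define Dq where "Dq i s = q1 s i - q2 s i" for i s
  define Dp where "Dp i s = p1 s i - p2 s i" for i s
  define E where "E i s = tnorm2 Le (Dq i s) (Dp i s)" for i s
  define E' where "E' i s = 2 * (Dq i s \<bullet> Dp i s) + 2 * (Dp i s \<bullet> (F2 s i - F1 s i)) / Le" for i s
  define S where "S s = (\<Sum>j<N. E j s)" for s
  define S' where "S' s = (\<Sum>j<N. E' j s)" for s
  have dq1: "((\<lambda>s. q1 s i) has_vector_derivative p1 t i) (at t within {0..h})"
    if "t \<in> {0..h}" "i < N" for t i using flow1 that unfolding is_flow_def by blast
  have dq2: "((\<lambda>s. q2 s i) has_vector_derivative p2 t i) (at t within {0..h})"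
    if "t \<in> {0..h}" "i < N" for t i using flow2 that unfolding is_flow_def by blast
  have dp1: "((\<lambda>s. p1 s i) has_vector_derivative - F1 t i) (at t within {0..h})"
    if "t \<in> {0..h}" "i < N" for t i
    using flow_p_deriv[OF gradV gradW Wsym WLip Lt flow1 that] unfolding F1_def .
  have dp2: "((\<lambda>s. p2 s i) has_vector_derivative - F2 t i) (at t within {0..h})"
    if "t \<in> {0..h}" "i < N" for t i
    using flow_p_deriv[OF gradV gradW Wsym WLip Lt flow2 that] unfolding F2_def .
  have dE: "(E i has_real_derivative E' i t) (at t within {0..h})"
    if "t \<in> {0..h}" "i < N" for t i
  proof -
    have a: "((\<lambda>s. Dq i s) has_vector_derivative Dp i t) (at t within {0..h})"
      unfolding Dq_def Dp_def by (rule has_vector_derivative_diff[OF dq1[OF that] dq2[OF that]])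
    have b: "((\<lambda>s. Dp i s) has_vector_derivative (F2 t i - F1 t i)) (at t within {0..h})"
      using has_vector_derivative_diff[OF dp1[OF that] dp2[OF that]] unfolding Dp_def by simp
    have "((\<lambda>s. (norm (Dq i s))\<^sup>2 + (norm (Dp i s))\<^sup>2 / Le) has_real_derivative
        2 * (Dq i t \<bullet> Dp i t) + 2 * (Dp i t \<bullet> (F2 t i - F1 t i)) / Le) (at t within {0..h})"
      by (intro DERIV_add DERIV_cdivide norm2_deriv a b)
    moreover have "E i = (\<lambda>s. (norm (Dq i s))\<^sup>2 + (norm (Dp i s))\<^sup>2 / Le)"
      by (simp add: fun_eq_iff E_def tnorm2_def)
    ultimately show ?thesis unfolding E'_def by simp
  qed
  have Enn: "E i s \<ge> 0" for i s by (simp add: E_def tnorm2_def Le less_imp_le)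
  have Sge: "(norm (Dq i s))\<^sup>2 \<le> E i s" for i s by (simp add: E_def tnorm2_def Le less_imp_le)
  have bE: "E' i t \<le> 2 * c * E i t + (c / 2) * (S t / N)"
    if t: "t \<in> {0..h}" and i: "i < N" for t i
  proof -
    define A where "A = norm (Dq i t)"
    define B where "B = norm (Dp i t)"
    define a where "a = L + eps * Lt"
    define b where "b = eps * Lt"
    define mm where "mm = (\<Sum>j<N. norm (Dq j t)) / N"
    define Q where "Q = (\<Sum>j<N. (norm (Dq j t))\<^sup>2) / N"
    define \<beta> where "\<beta> = B / c"
    define \<alpha> where "\<alpha> = a / Le"
    define \<gamma> where "\<gamma> = b / Le"
    have fl: "norm (F1 t i - F2 t i) \<le> a * A + b * mm"
    proof -
      have "norm (F1 t i - F2 t i) \<le> (L + eps * Lt) * norm (q1 t i - q2 t i) + (eps * Lt / real N) * (\<Sum>j<N. norm (q1 t j - q2 t j))"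
        unfolding F1_def F2_def by (rule force_lip[OF VLip WLip i eps Lt])
      moreover have "(eps * Lt / real N) * (\<Sum>j<N. norm (q1 t j - q2 t j)) = b * mm"
        by (simp add: b_def mm_def Dq_def)
      ultimately show ?thesis by (simp add: a_def A_def Dq_def)
    qed
    have E'le: "E' i t \<le> 2 * A * B + 2 * B * (a * A + b * mm) / Le"
    proof -
      have 1: "Dq i t \<bullet> Dp i t \<le> A * B" unfolding A_def B_def by (rule norm_cauchy_schwarz)
      have "Dp i t \<bullet> (F2 t i - F1 t i) \<le> B * norm (F2 t i - F1 t i)" unfolding B_def by (rule norm_cauchy_schwarz)
      also have "\<dots> \<le> B * (a * A + b * mm)" using fl by (simp add: B_def norm_minus_commute mult_left_mono)
      finally have 2: "2 * (Dp i t \<bullet> (F2 t i - F1 t i)) / Le \<le> 2 * (B * (a * A + b * mm)) / Le"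
        using Le by (simp add: divide_right_mono)
      show ?thesis unfolding E'_def using 1 2 by simp
    qed
    have mmQ: "2 * \<beta> * mm \<le> Q + \<beta>\<^sup>2"
    proof -
      have "(\<Sum>j<N. 2 * \<beta> * norm (Dq j t)) \<le> (\<Sum>j<N. (norm (Dq j t))\<^sup>2 + \<beta>\<^sup>2)"
        by (intro sum_mono) (smt (verit) sum_squares_bound)
      then have "2 * \<beta> * (\<Sum>j<N. norm (Dq j t)) \<le> (\<Sum>j<N. (norm (Dq j t))\<^sup>2) + real N * \<beta>\<^sup>2"
        by (simp add: sum_distrib_left sum.distrib)
      then have "(2 * \<beta> * (\<Sum>j<N. norm (Dq j t))) / N \<le> ((\<Sum>j<N. (norm (Dq j t))\<^sup>2) + real N * \<beta>\<^sup>2) / N"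
        using Npos by (simp add: divide_right_mono)
      then show ?thesis using Npos unfolding mm_def Q_def by (simp add: add_divide_distrib)
    qed
    have ab: "a + b = Le" by (simp add: a_def b_def Le_def)
    have a0: "a \<ge> 0" using L eps Lt by (simp add: a_def)
    have b0: "b \<ge> 0" using eps Lt by (simp add: b_def)
    have ineq: "2 * A * \<beta> * (1 + \<alpha>) + \<gamma> * (2 * \<beta> * mm) \<le> 2 * A\<^sup>2 + 2 * \<beta>\<^sup>2 + Q / 2"
    proof (rule key_ineq[OF _ _ _ _ _ mmQ])
      show "0 \<le> \<alpha>" using a0 Le by (simp add: \<alpha>_def)
      show "0 \<le> \<gamma>" using b0 Le by (simp add: \<gamma>_def)
      show "\<alpha> + \<gamma> = 1" using ab Le by (simp add: \<alpha>_def \<gamma>_def add_divide_distrib[symmetric])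
      show "\<gamma> \<le> 1/2" using Le L by (simp add: \<gamma>_def b_def Le_def field_simps)
      show "0 \<le> Q" using Npos by (simp add: Q_def sum_nonneg)
      show "0 \<le> A" by (simp add: A_def)
      show "0 \<le> \<beta>" using c by (simp add: \<beta>_def B_def)
    qed
    have B: "B = c * \<beta>" using c by (simp add: \<beta>_def)
    have eq1: "2 * A * B + 2 * B * (a * A + b * mm) / Le = c * (2 * A * \<beta> * (1 + \<alpha>) + \<gamma> * (2 * \<beta> * mm))"
      unfolding B \<alpha>_def \<gamma>_def using c cc[symmetric] by (simp add: field_simps)
    have eq2: "c * (2 * A\<^sup>2 + 2 * \<beta>\<^sup>2 + Q / 2) = 2 * c * E i t + (c / 2) * Q"
      unfolding E_def tnorm2_def A_def[symmetric] B_def[symmetric] B using c cc[symmetric]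
      by (simp add: field_simps power2_eq_square)
    have QS: "Q \<le> S t / N"
      unfolding Q_def S_def using Npos by (intro divide_right_mono sum_mono Sge) auto
    have "E' i t \<le> c * (2 * A * \<beta> * (1 + \<alpha>) + \<gamma> * (2 * \<beta> * mm))" using E'le eq1 by simp
    also have "\<dots> \<le> c * (2 * A\<^sup>2 + 2 * \<beta>\<^sup>2 + Q / 2)" using ineq c by (simp add: mult_left_mono)
    also have "\<dots> \<le> 2 * c * E i t + (c / 2) * (S t / N)" using mult_left_mono[OF QS, of "c / 2"] c unfolding eq2 by simp
    finally show ?thesis .
  qed
  have dS: "(S has_real_derivative S' t) (at t within {0..h})" if "t \<in> {0..h}" for t
  proof -
    have "((\<lambda>s. \<Sum>j<N. E j s) has_real_derivative (\<Sum>j<N. E' j t)) (at t within {0..h})"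
      using dE[OF that] by (intro DERIV_sum) auto
    then show ?thesis unfolding S_def[abs_def] S'_def .
  qed
  have bS: "S' t \<le> (5/2 * c) * S t + 0" if "t \<in> {0..h}" for t
  proof -
    have "S' t \<le> (\<Sum>j<N. 2 * c * E j t + (c / 2) * (S t / N))"
      unfolding S'_def using bE[OF that] by (intro sum_mono) auto
    also have "\<dots> = 2 * c * S t + real N * ((c / 2) * (S t / N))"
      by (simp only: sum.distrib S_def sum_distrib_left sum_constant card_lessThan)
    also have "\<dots> = 2 * c * S t + (c / 2) * S t"
      using Npos by simp
    finally show ?thesis by simp
  qed
  have k1: "5/2 * c > 0" using c by simp
  have S0: "S 0 \<ge> 0" unfolding S_def using Enn by (simp add: sum_nonneg)
  define M where "M = exp (5/2 * c * h) * S 0 / N"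
  have M0: "M \<ge> 0" using S0 Npos by (simp add: M_def)
  have SM: "S t / N \<le> M" if "t \<in> {0..h}" for t
  proof -
    have "S t + 0 / (5/2 * c) \<le> exp (5/2 * c * t) * (S 0 + 0 / (5/2 * c))"
      by (rule gronwall_lin[OF dS bS k1 that])
    also have "\<dots> \<le> exp (5/2 * c * h) * S 0"
      using that c S0 by (auto intro!: mult_right_mono)
    finally show ?thesis using Npos by (simp add: M_def divide_right_mono)
  qed
  have Ebound: "E i s \<le> exp (2 * c * h) * (E i 0 + M / 4) - M / 4"
    if s: "s \<in> {0..h}" and i: "i < N" for i s
  proof -
    have bE2: "E' i t \<le> (2 * c) * E i t + (c / 2) * M" if "t \<in> {0..h}" for t
      using bE[OF that i] mult_left_mono[OF SM[OF that], of "c / 2"] c by linarith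
    have g: "E i s + (c / 2) * M / (2 * c) \<le> exp (2 * c * s) * (E i 0 + (c / 2) * M / (2 * c))"
      by (rule gronwall_lin[OF dE[OF _ i] bE2 _ s]) (use c in auto)
    have eq: "(c / 2) * M / (2 * c) = M / 4" using c by simp
    have m: "exp (2 * c * s) * (E i 0 + M / 4) \<le> exp (2 * c * h) * (E i 0 + M / 4)"
      using s c Enn[of i 0] M0 by (auto intro!: mult_right_mono)
    show ?thesis using g[unfolded eq] m by linarith
  qed
  have SUPb: "(SUP s\<in>{0..h}. E l s) \<le> exp (2 * c * h) * (E l 0 + M / 4) - M / 4" if "l < N" for l
    using h by (intro cSUP_least Ebound that) auto
  have "(\<Sum>l<N. SUP s\<in>{0..h}. E l s) \<le> (\<Sum>l<N. exp (2 * c * h) * (E l 0 + M / 4) - M / 4)"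
    by (intro sum_mono SUPb) auto
  also have "\<dots> = exp (2 * c * h) * S 0 + (exp (2 * c * h) - 1) * (real N * M) / 4"
    by (simp add: S_def sum.distrib sum_subtractf sum_distrib_left sum_distrib_right algebra_simps diff_divide_distrib)
  also have "real N * M = exp (5/2 * (c * h)) * S 0" using Npos by (simp add: M_def)
  also have "exp (2 * c * h) = exp (2 * (c * h))" by (simp add: mult.assoc)
  also have "exp (2 * (c * h)) * S 0 + (exp (2 * (c * h)) - 1) * (exp (5/2 * (c * h)) * S 0) / 4 \<le> (1 + 7 * (c * h)) * S 0"
  proof (rule final_arith[OF _ _ S0])
    show "0 \<le> c * h" using c h by simp
    have "(c * h)\<^sup>2 = Le * h\<^sup>2" using cc by (simp add: power2_eq_square algebra_simps)
    then have "(c * h)\<^sup>2 \<le> 1/9" using hLe[folded Le_def] by linarith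
    moreover have "(1/3::real)\<^sup>2 = 1/9" by (simp add: power2_eq_square)
    ultimately have "(c * h)\<^sup>2 \<le> (1/3)\<^sup>2" by simp
    then show "c * h \<le> 1/3" by (rule power2_le_imp_le) simp
  qed
  finally have main: "(\<Sum>l<N. SUP s\<in>{0..h}. E l s) \<le> (1 + 7 * c * h) * S 0" by (simp add: mult.assoc)
  have E0: "E l 0 = tnorm2 Le (x l - y l) (v l - u l)" if "l < N" for l
    using flow1 flow2 that unfolding is_flow_def E_def Dq_def Dp_def by simp
  have "S 0 = (\<Sum>l<N. tnorm2 Le (x l - y l) (v l - u l))" unfolding S_def using E0 by simp
  moreover have "(\<Sum>l<N. SUP s\<in>{0..h}. E l s) = (\<Sum>l<N. SUP s\<in>{0..h}. tnorm2 Le (q1 s l - q2 s l) (p1 s l - p2 s l))"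
    by (simp add: E_def Dq_def Dp_def)
  ultimately show ?thesis using main unfolding Le_def c_def by simp
qed

end
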